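(* Let $n$ and $d\ge 50$ be positive integers, $c\in[d]$, $\mathcal{F}\subseteq 2^{[n]}$ a hereditary family, and $x\in[n]$ a vertex with $d_{\mathcal{F}}(x)\ge 2^{d-1}-c+1$. Then: (1) if $|N(x)|=d$, then $\omega_{\mathcal{F}}(x)>\mathfrak{B}_c-\frac{1}{18}$; (2) if $|N(x)|>d$, then $\omega_{\mathcal{F}}(x)>\mathfrak{B}_c-\frac{1}{18}+\frac{|N(x)|-d}{6}>\mathfrak{B}_c$.
   Context: A family $\mathcal{F}\subseteq 2^{[n]}$ is hereditary if $F'\subseteq F\in\mathcal{F}$ implies $F'\in\mathcal{F}$. $d_{\mathcal{F}}(x)=|\{F\in\mathcal{F}:x\in F\}|$; $N(x)=\bigcup_{x\in F\in\mathcal{F}}F$. The weight of $x$ is $\omega_{\mathcal{F}}(x)=\sum_{x\in F\in\mathcal{F}}\frac{1}{|F|}$. For $1\le c\le d$, $\mathfrak{B}_c=\frac{2^d-c}{d}$ if $1\le c\le d-1$ and $\mathfrak{B}_d=\frac{2^d-d-\frac12}{d}$. *)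

theory Defs
  imports Complex_Main
begin

definition hereditary :: "'a set set \<Rightarrow> bool" where
  "hereditary \<F> \<longleftrightarrow> (\<forall>F \<in> \<F>. \<forall>F'. F' \<subseteq> F \<longrightarrow> F' \<in> \<F>)"

definition degree :: "'a set set \<Rightarrow> 'a \<Rightarrow> nat" where
  "degree \<F> x = card {F \<in> \<F>. x \<in> F}"

definition nbhd :: "'a set set \<Rightarrow> 'a \<Rightarrow> 'a set" where
  "nbhd \<F> x = \<Union> {F \<in> \<F>. x \<in> F}"

definition weight :: "'a set set \<Rightarrow> 'a \<Rightarrow> real" where
  "weight \<F> x = (\<Sum>F \<in> {F \<in> \<F>. x \<in> F}. 1 / real (card F))"

definition frakB :: "nat \<Rightarrow> nat \<Rightarrow> real" where
  "frakB d c = (if c = d then (2 ^ d - real d - 1/2) / real d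
                else (2 ^ d - real c) / real d)"

end

theory Submission
  imports Defs
begin

fun pop :: "nat \<Rightarrow> nat" where
  "pop n = (if n = 0 then 0 else n mod 2 + pop (n div 2))"
declare pop.simps[simp del]

lemma pop_0[simp]: "pop 0 = 0" by (simp add: pop.simps)
lemma pop_even[simp]: "pop (2*n) = pop n"
  by (cases "n=0") (simp_all add: pop.simps[of "2*n"])
lemma pop_odd[simp]: "pop (Suc (2*n)) = Suc (pop n)"
  by (simp add: pop.simps[of "Suc(2*n)"])
lemma pop_1[simp]: "pop (Suc 0) = Suc 0"
  using pop_odd[of 0] by simp

lemma nat_parity: obtains p where "a = 2*p" | p where "a = Suc (2*p)"
  by (metis oddE evenE Suc_eq_plus1)

lemma pop_Suc_le: "pop (Suc s) \<le> Suc (pop s)"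
proof (induction s rule: less_induct)
  case (less s)
  show ?case
  proof (cases s rule: nat_parity)
    case (1 t) thus ?thesis by simp
  next
    case (2 t)
    hence "Suc s = 2 * Suc t" by simp
    hence "pop (Suc s) = pop (2 * Suc t)" by (rule arg_cong)
    also have "\<dots> = pop (Suc t)" by (rule pop_even)
    finally have "pop (Suc s) = pop (Suc t)" .
    moreover have "t < s" using 2 by simp
    ultimately have "pop (Suc s) \<le> Suc (pop t)" using less.IH by simp
    thus ?thesis using 2 by simp
  qed
qed

lemma pop_pow[simp]: "pop (2^n) = 1"
  by (induction n) (simp_all add: pop.simps[of 1])

lemma pop_pow_minus: "pop (2^n - 1) = n"
proof (induction n)
  case 0 thus ?case by simp
next
  case (Suc n)
  obtain t where t: "(2::nat)^n = Suc t" by (metis not0_implies_Suc power_not_zero zero_neq_numeral)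
  have "(2::nat)^Suc n - 1 = Suc (2 * (2^n - 1))" using t by simp
  hence "pop ((2::nat)^Suc n - 1) = pop (Suc (2 * (2^n - 1)))" by (rule arg_cong)
  hence "pop ((2::nat)^Suc n - 1) = Suc (pop (2^n - 1))" by (simp only: pop_odd)
  thus ?case using Suc by linarith
qed

lemma pop_le_K: "i < 2^K \<Longrightarrow> pop i \<le> K"
proof (induction K arbitrary: i)
  case 0 thus ?case by simp
next
  case (Suc K)
  show ?case
  proof (cases i rule: nat_parity)
    case (1 p) thus ?thesis using Suc by force
  next
    case (2 p) thus ?thesis using Suc by force
  qed
qed

lemma pop_compl: "i < 2^D \<Longrightarrow> pop i + pop (2^D - Suc i) = D"
proof (induction D arbitrary: i)
  case 0 thus ?case by simp
next
  case (Suc D)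
  show ?case
  proof (cases i rule: nat_parity)
    case (1 p)
    have p: "p < 2^D" using Suc.prems 1 by simp
    have "(2::nat)^Suc D - Suc i = Suc (2 * (2^D - Suc p))" using 1 p
      unfolding power_Suc by linarith
    hence "pop ((2::nat)^Suc D - Suc i) = pop (Suc (2 * (2^D - Suc p)))" by (rule arg_cong)
    hence "pop ((2::nat)^Suc D - Suc i) = Suc (pop (2^D - Suc p))" by (simp only: pop_odd)
    moreover have "pop i = pop p" using 1 by simp
    ultimately show ?thesis using Suc.IH[OF p] by linarith
  next
    case (2 p)
    have p: "p < 2^D" using Suc.prems 2 by simp
    have "(2::nat)^Suc D - Suc i = 2 * (2^D - Suc p)" using 2 p
      unfolding power_Suc by linarith
    hence "pop ((2::nat)^Suc D - Suc i) = pop (2 * (2^D - Suc p))" by (rule arg_cong)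
    hence "pop ((2::nat)^Suc D - Suc i) = pop (2^D - Suc p)" by (simp only: pop_even)
    moreover have "pop i = Suc (pop p)" using 2 by simp
    ultimately show ?thesis using Suc.IH[OF p] by linarith
  qed
qed

lemma sum_split2: "(\<Sum>i<2*n. f i) = (\<Sum>i<n. f (2*i) + f (Suc (2*i)))"
  by (induction n) (simp_all add: algebra_simps)

definition B :: "nat \<Rightarrow> nat \<Rightarrow> real" where
  "B k N = (\<Sum>i<N. 1 / (real (pop i) + real k + 1))"

lemma B_0[simp]: "B k 0 = 0" by (simp add: B_def)
lemma B_Suc: "B k (Suc N) = B k N + 1 / (real (pop N) + real k + 1)"
  by (simp add: B_def)
lemma B_even: "B k (2*n) = B k n + B (Suc k) n"
  by (simp add: B_def sum_split2 sum.distrib add_ac)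
lemma B_odd: "B k (Suc (2*n)) = B k (Suc n) + B (Suc k) n"
  by (simp add: B_Suc B_even)
lemma B_mono: "M \<le> N \<Longrightarrow> B k M \<le> B k N"
  unfolding B_def by (rule sum_mono2) auto

lemma B1: "B k (Suc 0) = 1 / (real k + 1)" by (simp add: B_Suc)

lemma harper: "b \<le> a \<Longrightarrow> B k (a+b) \<le> B k a + B (Suc k) b"
proof (induction "a+b" arbitrary: a b k rule: less_induct)
  case less
  note IH = less.hyps
  show ?case
  proof (cases "b = 0")
    case True thus ?thesis by simp
  next
    case False
    hence b1: "b \<ge> 1" by simp
    show ?thesis
    proof (cases a rule: nat_parity)
      case (1 p)
      show ?thesis
      proof (cases b rule: nat_parity)
        case (1 q)
        have "q \<le> p" "p + q < a + b" using \<open>a = 2*p\<close> 1 less.prems b1 by auto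
        hence h1: "B k (p+q) \<le> B k p + B (Suc k) q" and h2: "B (Suc k) (p+q) \<le> B (Suc k) p + B (Suc (Suc k)) q"
          using IH[of p q k] IH[of p q "Suc k"] by auto
        have "a + b = 2*(p+q)" using \<open>a = 2*p\<close> 1 by simp
        hence "B k (a+b) = B k (p+q) + B (Suc k) (p+q)" by (simp only: B_even)
        moreover have "B k a = B k p + B (Suc k) p" using \<open>a = 2*p\<close> by (simp only: B_even)
        moreover have "B (Suc k) b = B (Suc k) q + B (Suc (Suc k)) q" using 1 by (simp only: B_even)
        ultimately show ?thesis using h1 h2 by linarith
      next
        case (2 q)
        have "Suc q \<le> p" "p + Suc q < a + b" using \<open>a = 2*p\<close> 2 less.prems by auto
        hence h1: "B k (p+Suc q) \<le> B k p + B (Suc k) (Suc q)" using IH[of p "Suc q" k] by auto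
        have "q \<le> p" "p + q < a + b" using \<open>a = 2*p\<close> 2 less.prems by auto
        hence h2: "B (Suc k) (p+q) \<le> B (Suc k) p + B (Suc (Suc k)) q" using IH[of p q "Suc k"] by auto
        have "a + b = Suc (2*(p+q))" using \<open>a = 2*p\<close> 2 by simp
        hence "B k (a+b) = B k (Suc (p+q)) + B (Suc k) (p+q)" by (simp only: B_odd)
        moreover have "B k a = B k p + B (Suc k) p" using \<open>a = 2*p\<close> by (simp only: B_even)
        moreover have "B (Suc k) b = B (Suc k) (Suc q) + B (Suc (Suc k)) q" using 2 by (simp only: B_odd)
        ultimately show ?thesis using h1 h2 by simp
      qed
    next
      case (2 p)
      show ?thesis
      proof (cases b rule: nat_parity)
        case (1 q)
        have "q \<le> Suc p" "Suc p + q < a + b" using \<open>a = Suc (2*p)\<close> 1 less.prems b1 by auto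
        hence h1: "B k (Suc p + q) \<le> B k (Suc p) + B (Suc k) q" using IH[of "Suc p" q k] by auto
        have "q \<le> p" "p + q < a + b" using \<open>a = Suc (2*p)\<close> 1 less.prems b1 by auto
        hence h2: "B (Suc k) (p+q) \<le> B (Suc k) p + B (Suc (Suc k)) q" using IH[of p q "Suc k"] by auto
        have "a + b = Suc (2*(p+q))" using \<open>a = Suc (2*p)\<close> 1 by simp
        hence "B k (a+b) = B k (Suc (p+q)) + B (Suc k) (p+q)" by (simp only: B_odd)
        moreover have "B k a = B k (Suc p) + B (Suc k) p" using \<open>a = Suc (2*p)\<close> by (simp only: B_odd)
        moreover have "B (Suc k) b = B (Suc k) q + B (Suc (Suc k)) q" using 1 by (simp only: B_even)
        ultimately show ?thesis using h1 h2 by simp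
      next
        case (2 q)
        show ?thesis
        proof (cases "p + q = 0")
          case True
          hence "a = 1" "b = 1" using \<open>a = Suc (2*p)\<close> 2 by auto
          thus ?thesis by (simp add: B_Suc)
        next
          case False
          have "Suc q \<le> Suc p" "Suc p + Suc q < a + b" using \<open>a = Suc (2*p)\<close> 2 less.prems False by auto
          hence h1: "B k (Suc p + Suc q) \<le> B k (Suc p) + B (Suc k) (Suc q)" using IH[of "Suc p" "Suc q" k] by auto
          have "q \<le> p" "p + q < a + b" using \<open>a = Suc (2*p)\<close> 2 less.prems by auto
          hence h2: "B (Suc k) (p+q) \<le> B (Suc k) p + B (Suc (Suc k)) q" using IH[of p q "Suc k"] by auto
          have "a + b = 2*(Suc (p+q))" using \<open>a = Suc (2*p)\<close> 2 by simp
          hence e: "B k (a+b) = B k (Suc (p+q)) + B (Suc k) (Suc (p+q))" by (simp only: B_even)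
          have ea: "B k a = B k (Suc p) + B (Suc k) p" using \<open>a = Suc (2*p)\<close> by (simp only: B_odd)
          have eb: "B (Suc k) b = B (Suc k) (Suc q) + B (Suc (Suc k)) q" using 2 by (simp only: B_odd)
          have e1: "B k (Suc p + Suc q) = B k (Suc (p+q)) + 1 / (real (pop (Suc (p+q))) + real k + 1)"
            by (simp add: B_Suc)
          have e2: "B (Suc k) (Suc (p+q)) = B (Suc k) (p+q) + 1 / (real (pop (p+q)) + real (Suc k) + 1)"
            by (simp add: B_Suc)
          have "pop (Suc (p+q)) \<le> Suc (pop (p+q))" by (rule pop_Suc_le)
          hence "1 / (real (pop (p+q)) + real (Suc k) + 1) \<le> 1 / (real (pop (Suc (p+q))) + real k + 1)"
            by (intro divide_left_mono) auto
          thus ?thesis using e ea eb e1 e2 h1 h2 by linarith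
        qed
      qed
    qed
  qed
qed

lemma lam_ineq: "1 / (real x + real k + 3) + 1 / ((real k + 2) * (real k + 3)) \<le> 1 / (real k + 2)"
proof -
  have "1 / (real x + real k + 3) \<le> 1 / (real k + 3)" by (rule divide_left_mono) auto
  moreover have "1 / (real k + 3) + 1 / ((real k + 2) * (real k + 3)) = 1 / (real k + 2)"
    by (simp add: field_simps) (smt (verit) of_nat_0_le_iff mult_nonneg_nonneg)
  ultimately show ?thesis by linarith
qed

lemma lemY: "1 \<le> b \<Longrightarrow> b \<le> a \<Longrightarrow> 2^K < a \<Longrightarrow> a+b \<le> 2^(Suc K) \<Longrightarrow>
   B k (a+b) + 1/((real k+2)*(real k+3)) \<le> B k a + B (Suc k) b"
proof (induction "a+b" arbitrary: a b K rule: less_induct)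
  case less
  note IH = less.hyps
  define lam where "lam = 1/((real k+2)*(real k+3))"
  show ?case
  proof (cases K)
    case 0 thus ?thesis using less.prems by simp
  next
    case (Suc K')
    define t where "t = (2::nat)^K'"
    have t1: "(2::nat)^K = 2*t" and t2: "(2::nat)^Suc K = 4*t" using Suc by (simp_all add: t_def)
    have tpos: "t \<ge> 1" by (simp add: t_def)
    have A1: "2*t < a" "a + b \<le> 4*t" using less.prems t1 t2 by auto
    show ?thesis
    proof (cases a rule: nat_parity)
      case (1 p)
      show ?thesis
      proof (cases b rule: nat_parity)
        case (1 q)
        have c: "1 \<le> q" "q \<le> p" "2^K' < p" "p + q \<le> 2^Suc K'" "p + q < a + b"
          using \<open>a = 2*p\<close> 1 less.prems A1 by (auto simp: t_def)
        have h1: "B k (p+q) + lam \<le> B k p + B (Suc k) q" using IH[of p q K'] c unfolding lam_def by auto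
        have h2: "B (Suc k) (p+q) \<le> B (Suc k) p + B (Suc (Suc k)) q" using harper c by auto
        have "a + b = 2*(p+q)" using \<open>a = 2*p\<close> 1 by simp
        hence "B k (a+b) = B k (p+q) + B (Suc k) (p+q)" by (simp only: B_even)
        moreover have "B k a = B k p + B (Suc k) p" using \<open>a = 2*p\<close> by (simp only: B_even)
        moreover have "B (Suc k) b = B (Suc k) q + B (Suc (Suc k)) q" using 1 by (simp only: B_even)
        ultimately show ?thesis using h1 h2 unfolding lam_def by linarith
      next
        case (2 q)
        have c: "1 \<le> Suc q" "Suc q \<le> p" "2^K' < p" "p + Suc q \<le> 2^Suc K'" "p + Suc q < a + b" "q \<le> p"
          using \<open>a = 2*p\<close> 2 less.prems A1 by (auto simp: t_def)
        have h1: "B k (p+Suc q) + lam \<le> B k p + B (Suc k) (Suc q)" using IH[of p "Suc q" K'] c unfolding lam_def by auto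
        have h2: "B (Suc k) (p+q) \<le> B (Suc k) p + B (Suc (Suc k)) q" using harper c by auto
        have "a + b = Suc (2*(p+q))" using \<open>a = 2*p\<close> 2 by simp
        hence "B k (a+b) = B k (Suc (p+q)) + B (Suc k) (p+q)" by (simp only: B_odd)
        moreover have "B k a = B k p + B (Suc k) p" using \<open>a = 2*p\<close> by (simp only: B_even)
        moreover have "B (Suc k) b = B (Suc k) (Suc q) + B (Suc (Suc k)) q" using 2 by (simp only: B_odd)
        ultimately show ?thesis using h1 h2 unfolding lam_def by simp
      qed
    next
      case (2 p)
      show ?thesis
      proof (cases b rule: nat_parity)
        case (1 q)
        have c: "1 \<le> q" "q \<le> Suc p" "2^K' < Suc p" "Suc p + q \<le> 2^Suc K'" "Suc p + q < a + b" "q \<le> p"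
          using \<open>a = Suc (2*p)\<close> 1 less.prems A1 by (auto simp: t_def)
        have h1: "B k (Suc p + q) + lam \<le> B k (Suc p) + B (Suc k) q" using IH[of "Suc p" q K'] c unfolding lam_def by auto
        have h2: "B (Suc k) (p+q) \<le> B (Suc k) p + B (Suc (Suc k)) q" using harper c by auto
        have "a + b = Suc (2*(p+q))" using \<open>a = Suc (2*p)\<close> 1 by simp
        hence "B k (a+b) = B k (Suc (p+q)) + B (Suc k) (p+q)" by (simp only: B_odd)
        moreover have "B k a = B k (Suc p) + B (Suc k) p" using \<open>a = Suc (2*p)\<close> by (simp only: B_odd)
        moreover have "B (Suc k) b = B (Suc k) q + B (Suc (Suc k)) q" using 1 by (simp only: B_even)
        ultimately show ?thesis using h1 h2 unfolding lam_def by simp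
      next
        case (2 q)
        have c0: "q \<le> p" "t \<le> p" "p + q + 1 \<le> 2*t"
          using \<open>a = Suc (2*p)\<close> 2 less.prems A1 by auto
        have h2: "B (Suc k) (p+q) \<le> B (Suc k) p + B (Suc (Suc k)) q" using harper c0 by auto
        have "a + b = 2*(Suc (p+q))" using \<open>a = Suc (2*p)\<close> 2 by simp
        hence e: "B k (a+b) = B k (Suc (p+q)) + B (Suc k) (Suc (p+q))" by (simp only: B_even)
        have ea: "B k a = B k (Suc p) + B (Suc k) p" using \<open>a = Suc (2*p)\<close> by (simp only: B_odd)
        have eb: "B (Suc k) b = B (Suc k) (Suc q) + B (Suc (Suc k)) q" using 2 by (simp only: B_odd)
        have e1: "B k (Suc p + Suc q) = B k (Suc (p+q)) + 1 / (real (pop (Suc (p+q))) + real k + 1)"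
          by (simp add: B_Suc)
        have e2: "B (Suc k) (Suc (p+q)) = B (Suc k) (p+q) + 1 / (real (pop (p+q)) + real (Suc k) + 1)"
          by (simp add: B_Suc)
        show ?thesis
        proof (cases "p + q + 2 \<le> 2*t")
          case True
          have c: "1 \<le> Suc q" "Suc q \<le> Suc p" "2^K' < Suc p" "Suc p + Suc q \<le> 2^Suc K'" "Suc p + Suc q < a + b"
            using \<open>a = Suc (2*p)\<close> 2 c0 True tpos by (auto simp: t_def)
          have h1: "B k (Suc p + Suc q) + lam \<le> B k (Suc p) + B (Suc k) (Suc q)"
            using IH[of "Suc p" "Suc q" K'] c unfolding lam_def by auto
          have "pop (Suc (p+q)) \<le> Suc (pop (p+q))" by (rule pop_Suc_le)
          hence "1 / (real (pop (p+q)) + real (Suc k) + 1) \<le> 1 / (real (pop (Suc (p+q))) + real k + 1)"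
            by (intro divide_left_mono) auto
          thus ?thesis using e ea eb e1 e2 h1 h2 unfolding lam_def by linarith
        next
          case False
          hence s: "p + q = 2^Suc K' - 1" using c0 by (simp add: t_def)
          have ps: "pop (p+q) = Suc K'" by (simp only: s pop_pow_minus)
          have "Suc (p+q) = 2^Suc K'" using s by simp
          hence ps1: "pop (Suc (p+q)) = 1" by simp
          have h1: "B k (Suc p + Suc q) \<le> B k (Suc p) + B (Suc k) (Suc q)" using harper[of "Suc q" "Suc p" k] c0 by auto
          have "1 / (real (pop (p+q)) + real (Suc k) + 1) + lam \<le> 1 / (real (pop (Suc (p+q))) + real k + 1)"
            using lam_ineq[of K' k] ps ps1 unfolding lam_def by (simp add: add_ac)
          thus ?thesis using e ea eb e1 e2 h1 h2 unfolding lam_def by linarith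
        qed
      qed
    qed
  qed
qed

definition dc :: "nat set set \<Rightarrow> bool" where "dc G \<longleftrightarrow> (\<forall>S\<in>G. \<forall>T. T \<subseteq> S \<longrightarrow> T \<in> G)"
definition Wk :: "nat \<Rightarrow> nat set set \<Rightarrow> real" where
  "Wk k G = (\<Sum>S\<in>G. 1 / (real (card S) + real k + 1))"

lemma split_family:
  assumes GV: "G \<subseteq> Pow (insert y V)" and yV: "y \<notin> V" and fV: "finite V" and dG: "dc G"
  defines "G0 \<equiv> {S\<in>G. y \<notin> S}" and "G1 \<equiv> (\<lambda>S. S - {y}) ` {S\<in>G. y \<in> S}"
  shows "G0 \<subseteq> Pow V" "G1 \<subseteq> Pow V" "dc G0" "dc G1" "G1 \<subseteq> G0" "card G = card G0 + card G1"
        "Wk k G = Wk k G0 + Wk (Suc k) G1" "finite G0" "finite G1"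
proof -
  define Gy where "Gy = {S\<in>G. y \<in> S}"
  have fG: "finite G" using GV fV by (meson finite_Pow_iff finite_insert finite_subset)
  show "G0 \<subseteq> Pow V" using GV unfolding G0_def by auto
  show "G1 \<subseteq> Pow V" using GV unfolding G1_def by auto
  show "dc G0" using dG unfolding G0_def dc_def by auto
  show "dc G1" unfolding dc_def
  proof (intro ballI allI impI)
    fix S T assume S: "S \<in> G1" and TS: "T \<subseteq> S"
    then obtain S' where S': "S' \<in> G" "y \<in> S'" "S = S' - {y}" unfolding G1_def by auto
    have "insert y T \<subseteq> S'" using S' TS by auto
    hence "insert y T \<in> G" using dG S' unfolding dc_def by blast
    moreover have "T = insert y T - {y}" using S' TS by auto
    ultimately show "T \<in> G1" unfolding G1_def by blast
  qed
  show "G1 \<subseteq> G0"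
  proof
    fix T assume "T \<in> G1"
    then obtain S' where S': "S' \<in> G" "y \<in> S'" "T = S' - {y}" unfolding G1_def by auto
    hence "T \<in> G" using dG unfolding dc_def by blast
    thus "T \<in> G0" using S' unfolding G0_def by auto
  qed
  have inj: "inj_on (\<lambda>S. S - {y}) Gy"
  proof (rule inj_onI)
    fix S S' assume "S \<in> Gy" "S' \<in> Gy" "S - {y} = S' - {y}"
    hence "insert y (S - {y}) = insert y (S' - {y})" "y \<in> S" "y \<in> S'" by (auto simp: Gy_def)
    thus "S = S'" by (metis insert_Diff)
  qed
  have cG1: "card G1 = card Gy" unfolding G1_def Gy_def[symmetric] using inj by (simp add: card_image)
  have un: "G = G0 \<union> Gy" "G0 \<inter> Gy = {}" unfolding G0_def Gy_def by auto
  show fG0: "finite G0" using fG un by auto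
  have fGy: "finite Gy" using fG un by auto
  show "finite G1" unfolding G1_def using fGy Gy_def by simp
  show "card G = card G0 + card G1" using un fG0 fGy cG1 by (simp add: card_Un_disjoint)
  have "Wk k G = Wk k G0 + (\<Sum>S\<in>Gy. 1 / (real (card S) + real k + 1))"
    unfolding Wk_def using un fG0 fGy by (simp add: sum.union_disjoint)
  moreover have "Wk (Suc k) G1 = (\<Sum>S\<in>Gy. 1 / (real (card S) + real k + 1))"
  proof -
    have "Wk (Suc k) G1 = (\<Sum>S\<in>Gy. 1 / (real (card (S - {y})) + real (Suc k) + 1))"
      unfolding Wk_def G1_def Gy_def[symmetric] using inj by (simp add: sum.reindex)
    also have "\<dots> = (\<Sum>S\<in>Gy. 1 / (real (card S) + real k + 1))"
    proof (rule sum.cong)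
      fix S assume "S \<in> Gy"
      hence "finite S" "y \<in> S" using GV fV unfolding Gy_def by (auto intro: finite_subset)
      hence "card S = Suc (card (S - {y}))" by (metis card_Suc_Diff1)
      thus "1 / (real (card (S - {y})) + real (Suc k) + 1) = 1 / (real (card S) + real k + 1)" by simp
    qed simp
    finally show ?thesis .
  qed
  ultimately show "Wk k G = Wk k G0 + Wk (Suc k) G1" by simp
qed

lemma thmX: "finite V \<Longrightarrow> G \<subseteq> Pow V \<Longrightarrow> dc G \<Longrightarrow> B k (card G) \<le> Wk k G"
proof (induction V arbitrary: G k rule: finite_induct)
  case empty
  hence "G = {} \<or> G = {{}}" by auto
  thus ?case by (auto simp: Wk_def B_Suc)
next
  case (insert y V)
  define G0 where "G0 = {S\<in>G. y \<notin> S}"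
  define G1 where "G1 = (\<lambda>S. S - {y}) ` {S\<in>G. y \<in> S}"
  note sp = split_family[OF insert.prems(1) insert.hyps(2) insert.hyps(1) insert.prems(2), folded G0_def G1_def]
  have "card G1 \<le> card G0" using sp by (simp add: card_mono)
  hence "B k (card G) \<le> B k (card G0) + B (Suc k) (card G1)" using harper sp by simp
  also have "\<dots> \<le> Wk k G0 + Wk (Suc k) G1" using insert.IH sp by (intro add_mono) auto
  also have "\<dots> = Wk k G" using sp by simp
  finally show ?case .
qed

lemma thmZ: "finite V \<Longrightarrow> G \<subseteq> Pow V \<Longrightarrow> dc G \<Longrightarrow> (\<forall>y\<in>V. {y} \<in> G) \<Longrightarrow> card G \<le> 2^K \<Longrightarrow>
   B 0 (card G) + (real (card V) - real K) / 6 \<le> Wk 0 G"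
proof (induction V arbitrary: G K rule: finite_induct)
  case empty
  have "B 0 (card G) \<le> Wk 0 G" using thmX[of "{}" G 0] empty by simp
  thus ?case by simp
next
  case (insert y V)
  define G0 where "G0 = {S\<in>G. y \<notin> S}"
  define G1 where "G1 = (\<lambda>S. S - {y}) ` {S\<in>G. y \<in> S}"
  note sp = split_family[OF insert.prems(1) insert.hyps(2) insert.hyps(1) insert.prems(2), folded G0_def G1_def]
  have yG: "{y} \<in> G" using insert.prems by auto
  hence eG: "{} \<in> G" using insert.prems(2) unfolding dc_def by blast
  have "{} \<in> G1" unfolding G1_def using yG by (auto intro!: image_eqI[where x="{y}"])
  hence N1: "card G1 \<ge> 1" using sp by (metis One_nat_def Suc_leI card_gt_0_iff empty_iff)
  have "{} \<in> G0" using eG unfolding G0_def by simp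
  have sing0: "\<forall>z\<in>V. {z} \<in> G0" using insert.prems(3) insert.hyps(2) unfolding G0_def by auto
  have c01: "card G1 \<le> card G0" using sp by (simp add: card_mono)
  have cV: "card (insert y V) = Suc (card V)" using insert.hyps by simp
  have W1: "B (Suc 0) (card G1) \<le> Wk (Suc 0) G1" using thmX sp insert.hyps(1) by blast
  have "{{}, {y}} \<subseteq> G" using eG yG by auto
  moreover have fG: "finite G" using insert.prems(1) insert.hyps(1) by (meson finite_Pow_iff finite_insert finite_subset)
  ultimately have "2 \<le> card G" using card_mono[of G "{{},{y}}"] by simp
  hence K0: "K \<noteq> 0" using insert.prems(4) by (cases K) auto
  then obtain K' where K': "K = Suc K'" by (cases K) auto
  show ?case
  proof (cases "card G0 \<le> 2^K'")
    case True
    have IH: "B 0 (card G0) + (real (card V) - real K') / 6 \<le> Wk 0 G0"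
      using insert.IH[of G0 K'] sp sing0 True by blast
    have "B 0 (card G) \<le> B 0 (card G0) + B (Suc 0) (card G1)" using harper c01 sp by simp
    thus ?thesis using IH W1 sp cV K' by simp
  next
    case False
    have IH: "B 0 (card G0) + (real (card V) - real K) / 6 \<le> Wk 0 G0"
      using insert.IH[of G0 K] sp sing0 insert.prems(4) by simp
    have "B 0 (card G0 + card G1) + 1/6 \<le> B 0 (card G0) + B (Suc 0) (card G1)"
      using lemY[of "card G1" "card G0" K' 0] N1 c01 False insert.prems(4) sp K' by simp
    moreover have e1: "Wk 0 G = Wk 0 G0 + Wk (Suc 0) G1" using sp(7) .
    moreover have e2: "real (card (insert y V)) = real (card V) + 1" using cV by simp
    moreover have e3: "B 0 (card G) = B 0 (card G0 + card G1)" using sp(6) by simp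
    moreover have e5: "(real (card (insert y V)) - real K) / 6 = (real (card V) - real K) / 6 + 1/6"
      using cV by (simp add: field_simps)
    ultimately show ?thesis using IH W1 by linarith
  qed
qed

lemma popsum: "(\<Sum>i<2^D. f (pop i)) = (\<Sum>j\<le>D. real (D choose j) * f j)"
proof (induction D arbitrary: f)
  case 0 thus ?case by simp
next
  case (Suc D)
  have "(\<Sum>i<2^Suc D. f (pop i)) = (\<Sum>i<2*2^D. f (pop i))" by simp
  also have "\<dots> = (\<Sum>i<2^D. f (pop i)) + (\<Sum>i<2^D. f (Suc (pop i)))"
    by (simp only: sum_split2 pop_even pop_odd sum.distrib)
  also have "\<dots> = (\<Sum>j\<le>D. real (D choose j) * f j) + (\<Sum>j\<le>D. real (D choose j) * f (Suc j))"
    using Suc[of f] Suc[of "\<lambda>j. f (Suc j)"] by simp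
  also have "\<dots> = (\<Sum>j\<le>Suc D. real (Suc D choose j) * f j)"
  proof -
    have a: "(\<Sum>j\<le>D. real (D choose j) * f j) = (\<Sum>j\<le>Suc D. real (D choose j) * f j)"
      by simp
    have b: "(\<Sum>j\<le>Suc D. real (D choose j) * f j) = f 0 + (\<Sum>j\<le>D. real (D choose Suc j) * f (Suc j))"
      by (subst sum.atMost_Suc_shift) simp
    have c: "(\<Sum>j\<le>Suc D. real (Suc D choose j) * f j) = f 0 + (\<Sum>j\<le>D. real (Suc D choose Suc j) * f (Suc j))"
      by (subst sum.atMost_Suc_shift) simp
    show ?thesis unfolding a b c by (simp add: sum.distrib algebra_simps)
  qed
  finally show ?case .
qed

lemma B_pow_closed: "B 0 (2^D) = (2^Suc D - 1) / real (Suc D)"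
proof -
  have "B 0 (2^D) = (\<Sum>j\<le>D. real (D choose j) * (1 / (real j + 1)))"
    unfolding B_def using popsum[of "\<lambda>p. 1 / (real p + real 0 + 1)"] by simp
  also have "\<dots> = (\<Sum>j\<le>D. real (Suc D choose Suc j) / real (Suc D))"
  proof (rule sum.cong)
    fix j assume "j \<in> {..D}"
    have "real (Suc D) * real (D choose j) = real (Suc D choose Suc j) * real (Suc j)"
      using Suc_times_binomial_eq[of D j] by (metis of_nat_mult)
    thus "real (D choose j) * (1 / (real j + 1)) = real (Suc D choose Suc j) / real (Suc D)"
      by (simp add: field_simps)
  qed simp
  also have "\<dots> = real (\<Sum>j\<le>D. Suc D choose Suc j) / real (Suc D)"
    by (simp add: sum_divide_distrib)
  also have "(\<Sum>j\<le>D. Suc D choose Suc j) = 2^Suc D - 1"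
    using choose_row_sum[of "Suc D"] by (simp add: sum.atMost_Suc_shift del: sum.atMost_Suc)
  finally show ?thesis by (simp add: of_nat_diff)
qed

lemma B_add: "B k (M + r) = B k M + (\<Sum>j<r. 1 / (real (pop (M+j)) + real k + 1))"
  by (induction r) (simp_all add: B_Suc)

lemma B_loss: assumes "r \<le> 2^D"
  shows "B 0 (2^D) = B 0 (2^D - r) + (\<Sum>i<r. 1 / (real (Suc D) - real (pop i)))"
proof -
  define M where "M = 2^D - r"
  have M: "M + r = 2^D" using assms unfolding M_def by simp
  have "B 0 (2^D) = B 0 M + (\<Sum>j<r. 1 / (real (pop (M+j)) + real 0 + 1))"
    using B_add[of 0 M r] M by simp
  also have "(\<Sum>j<r. 1 / (real (pop (M+j)) + real 0 + 1)) = (\<Sum>i<r. 1 / (real (pop (M + (r - Suc i))) + real 0 + 1))"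
    by (rule sum.nat_diff_reindex[symmetric])
  also have "\<dots> = (\<Sum>i<r. 1 / (real (Suc D) - real (pop i)))"
  proof (rule sum.cong)
    fix i assume "i \<in> {..<r}"
    hence i: "i < 2^D" "M + (r - Suc i) = 2^D - Suc i" using M by auto
    have "pop i + pop (2^D - Suc i) = D" using pop_compl[OF i(1)] .
    thus "1 / (real (pop (M + (r - Suc i))) + real 0 + 1) = 1 / (real (Suc D) - real (pop i))"
      using i(2) by (simp add: algebra_simps)
  qed simp
  finally show ?thesis unfolding M_def .
qed

definition Sr :: "nat \<Rightarrow> real" where
  "Sr d = (\<Sum>i<d-1. real (pop i) / (real d - real (pop i)))"

definition Sq :: "nat \<Rightarrow> rat" where
  "Sq d = (\<Sum>i<d-1. of_nat (pop i) / (of_nat d - of_nat (pop i)))"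

definition chk :: "nat \<Rightarrow> bool" where
 "chk d = (let ps = map pop [0..<d-1] in
    sum_list (map (\<lambda>p. of_nat (count_list ps p) * (of_nat p / (of_nat d - of_nat p))) [0..<8]) < (of_nat d / 18 :: rat))"

lemma chk_range: "list_all chk [50..<70]"
  by code_simp

lemma group8: "\<forall>x\<in>set xs. x < (8::nat) \<Longrightarrow> sum_list (map h xs) = (\<Sum>p<(8::nat). of_nat (count_list xs p) * (h p :: rat))"
proof (induction xs)
  case Nil thus ?case by simp
next
  case (Cons x xs)
  have "(\<Sum>p<(8::nat). of_nat (count_list (x#xs) p) * h p) = (\<Sum>p<(8::nat). of_nat (count_list xs p) * h p + (if x = p then h p else 0))"
    by (rule sum.cong) (auto simp: algebra_simps)
  also have "\<dots> = (\<Sum>p<(8::nat). of_nat (count_list xs p) * h p) + (\<Sum>p<(8::nat). (if x = p then h p else 0))"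
    by (rule sum.distrib)
  also have "(\<Sum>p<(8::nat). (if x = p then h p else 0)) = h x" using Cons.prems by (simp add: sum.delta)
  finally show ?case using Cons by simp
qed

lemma Sq_chk: assumes "d < 130" "chk d" shows "Sq d < of_nat d / 18"
proof -
  have "Sq d = sum_list (map (\<lambda>i. of_nat (pop i) / (of_nat d - of_nat (pop i))) [0..<d-1])"
    unfolding Sq_def by (simp add: sum_set_upt_conv_sum_list_nat[symmetric] atLeast0LessThan)
  also have "\<dots> = sum_list (map (\<lambda>p. of_nat p / (of_nat d - of_nat p)) (map pop [0..<d-1]))"
    by (simp add: comp_def)
  also have "\<dots> = (\<Sum>p<8. of_nat (count_list (map pop [0..<d-1]) p) * (of_nat p / (of_nat d - of_nat p)))"
  proof (rule group8)
    show "\<forall>x\<in>set (map pop [0..<d - 1]). x < 8"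
    proof
      fix x assume "x \<in> set (map pop [0..<d - 1])"
      then obtain i where "i < d - 1" "x = pop i" by auto
      hence "i < 2^7" "x = pop i" using assms by auto
      thus "x < 8" using pop_le_K[of i 7] by simp
    qed
  qed
  also have "\<dots> = sum_list (map (\<lambda>p. of_nat (count_list (map pop [0..<d-1]) p) * (of_nat p / (of_nat d - of_nat p))) [0..<8])"
    by (simp add: sum_set_upt_conv_sum_list_nat[symmetric] atLeast0LessThan)
  finally show ?thesis using assms(2) unfolding chk_def Let_def by simp
qed

lemma Sr_Sq: "Sr d = of_rat (Sq d)"
  unfolding Sr_def Sq_def by (simp add: of_rat_sum of_rat_divide of_rat_diff)

lemma Sr_small: "50 \<le> d \<Longrightarrow> d < 70 \<Longrightarrow> Sr d < real d / 18"
proof -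
  assume a: "50 \<le> d" "d < 70"
  from chk_range have "\<forall>x\<in>set [50..<70]. chk x" by (simp only: list_all_iff)
  hence "\<forall>x\<in>{50..<70}. chk x" by (simp only: set_upt)
  hence "chk d" using a by auto
  hence "Sq d < of_nat d / 18" using Sq_chk a by simp
  hence "of_rat (Sq d) < (of_rat (of_nat d / 18) :: real)" by (simp only: of_rat_less)
  thus ?thesis by (simp add: Sr_Sq of_rat_divide)
qed

lemma E_bound: "N \<le> 2^K \<Longrightarrow> 2 * (\<Sum>i<N. pop i) \<le> N * K"
proof (induction K arbitrary: N)
  case 0
  hence "N = 0 \<or> N = 1" by auto
  thus ?case by auto
next
  case (Suc K)
  show ?case
  proof (cases N rule: nat_parity)
    case (1 n)
    have n: "n \<le> 2^K" using Suc.prems 1 by simp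
    have "(\<Sum>i<N. pop i) = (\<Sum>i<n. pop (2*i) + pop (Suc (2*i)))"
      unfolding 1 by (rule sum_split2)
    also have "\<dots> = (\<Sum>i<n. 2 * pop i + 1)" by (intro sum.cong refl) (simp; linarith)
    also have "\<dots> = 2 * (\<Sum>i<n. pop i) + n" by (induction n) simp_all
    finally have "(\<Sum>i<N. pop i) = 2 * (\<Sum>i<n. pop i) + n" .
    thus ?thesis using Suc.IH[OF n] 1 by (simp add: algebra_simps)
  next
    case (2 n)
    have n: "n \<le> 2^K" "Suc n \<le> 2^K" using Suc.prems 2 by simp_all
    have "(\<Sum>i<2*n. pop i) = (\<Sum>i<n. pop (2*i) + pop (Suc (2*i)))"
      by (rule sum_split2)
    also have "\<dots> = (\<Sum>i<n. 2 * pop i + 1)" by (intro sum.cong refl) (simp; linarith)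
    also have "\<dots> = 2 * (\<Sum>i<n. pop i) + n" by (induction n) simp_all
    finally have "(\<Sum>i<2*n. pop i) = 2 * (\<Sum>i<n. pop i) + n" .
    hence "(\<Sum>i<N. pop i) = 2 * (\<Sum>i<n. pop i) + n + pop n" unfolding 2 by simp
    also have "\<dots> = (\<Sum>i<n. pop i) + (\<Sum>i<Suc n. pop i) + n" by simp
    finally show ?thesis using Suc.IH[OF n(1)] Suc.IH[OF n(2)] 2 by (simp add: algebra_simps)
  qed
qed

lemma pow_lin: "7 \<le> K \<Longrightarrow> 10 * (K+1) \<le> (2::nat)^K"
proof (induction K rule: dec_induct)
  case base thus ?case by simp
next
  case (step K)
  have "10 \<le> (2::nat)^K" using step.IH by simp
  thus ?case using step.IH by simp
qed

lemma exK: assumes "70 \<le> d" shows "\<exists>K. d - 1 \<le> 2^K \<and> (10*K \<le> d \<or> K \<le> 7)"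
proof (cases "d - 1 \<le> 2^7")
  case True thus ?thesis by (intro exI[of _ 7]) simp
next
  case False
  define K where "K = (LEAST K. d - 1 \<le> (2::nat)^K)"
  have ex: "\<exists>K. d - 1 \<le> (2::nat)^K" using less_exp[of "d-1"] by (intro exI[of _ "d-1"]) simp
  have K1: "d - 1 \<le> 2^K" unfolding K_def by (rule LeastI_ex[OF ex])
  have "K \<noteq> 0" using K1 False by (cases K) auto
  then obtain K' where K': "K = Suc K'" by (cases K) auto
  have "\<not> d - 1 \<le> 2^K'" unfolding K_def using not_less_Least[of K' "\<lambda>K. d - 1 \<le> (2::nat)^K"] K' K_def by simp
  hence lt: "2^K' < d - 1" by simp
  have "7 \<le> K'"
  proof (rule ccontr)
    assume "\<not> 7 \<le> K'"
    hence "K \<le> 7" using K' by simp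
    hence "(2::nat)^K \<le> 2^7" by (rule power_increasing) simp
    thus False using K1 False by simp
  qed
  hence "10 * K \<le> 2^K'" using pow_lin[of K'] K' by simp
  hence "10 * K \<le> d" using lt assms by linarith
  thus ?thesis using K1 by (intro exI[of _ K]) simp
qed

lemma Sr_large: assumes "70 \<le> d" shows "Sr d < real d / 18"
proof -
  obtain K where K: "d - 1 \<le> 2^K" "10*K \<le> d \<or> K \<le> 7" using exK[OF assms] by blast
  have Kd: "K < d" using K(2) assms by auto
  have popK: "\<And>i. i < d - 1 \<Longrightarrow> pop i \<le> K" using K(1) by (intro pop_le_K) simp
  have dK: "real d - real K > 0" using Kd by simp
  have "Sr d \<le> (\<Sum>i<d-1. real (pop i) / (real d - real K))"
    unfolding Sr_def
  proof (rule sum_mono)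
    fix i assume "i \<in> {..<d-1}"
    hence p: "pop i \<le> K" using popK by simp
    show "real (pop i) / (real d - real (pop i)) \<le> real (pop i) / (real d - real K)"
      using p dK by (intro divide_left_mono) (auto simp: mult_pos_pos)
  qed
  also have "\<dots> = real (\<Sum>i<d-1. pop i) / (real d - real K)"
    by (simp add: sum_divide_distrib)
  also have "\<dots> \<le> (real (d-1) * real K / 2) / (real d - real K)"
  proof (rule divide_right_mono)
    have "2 * (\<Sum>i<d-1. pop i) \<le> (d-1) * K" using E_bound[OF K(1)] .
    hence "real (2 * (\<Sum>i<d-1. pop i)) \<le> real ((d-1) * K)" by (simp only: of_nat_le_iff)
    thus "real (\<Sum>i<d-1. pop i) \<le> real (d-1) * real K / 2" by simp
  qed (use dK in simp)
  also have "\<dots> < real d / 18"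
  proof -
    have rd: "real (d-1) = real d - 1" using assms by simp
    have h10: "10 * real K \<le> real d" using K(2) assms by auto
    have m: "0 \<le> real d * real d - 10 * (real d * real K)"
      using mult_nonneg_nonneg[of "real d" "real d - 10*real K"] h10 by (simp add: algebra_simps)
    have e1: "9 * (real d - 1) * real K = 9 * (real d * real K) - 9 * real K" by (simp add: algebra_simps)
    have e2: "real d * (real d - real K) = real d * real d - real d * real K" by (simp add: algebra_simps)
    have dK0: "0 \<le> real d * real K" by simp
    have key: "9 * (real d - 1) * real K < real d * (real d - real K)"
    proof (cases "K = 0")
      case True thus ?thesis using assms by simp
    next
      case False
      hence "real K > 0" by simp
      thus ?thesis unfolding e1 e2 using m dK0 by linarith
    qed
    show ?thesis using key dK unfolding rd by (simp add: field_simps)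
  qed
  finally show ?thesis .
qed

lemma Sr_bound: "50 \<le> d \<Longrightarrow> Sr d < real d / 18"
  using Sr_small Sr_large by (cases "d < 70") auto

lemma frac_id: "(a::real) > 0 \<Longrightarrow> a - p > 0 \<Longrightarrow> 1/(a - p) = 1/a + (p/(a-p))/a"
  by (simp add: field_simps)

lemma div6: "(Y::real) \<le> 6*X \<Longrightarrow> Y/6 \<le> X" by simp

lemma P1: assumes "50 \<le> d" "1 \<le> c" "c \<le> d" "2^(d-1) - (c-1) \<le> N"
  shows "frakB d c - 1/18 < B 0 N"
proof -
  obtain D where dD: "d = Suc D" using assms(1) by (cases d) auto
  define r where "r = c - 1"
  have rD: "r \<le> D" using assms dD unfolding r_def by simp
  have D2: "D < 2^D" by (rule less_exp)
  have r2: "r \<le> 2^D" using rD D2 by linarith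
  have mono: "B 0 (2^D - r) \<le> B 0 N" using assms(4) dD unfolding r_def by (intro B_mono) simp
  define L where "L = (\<Sum>i<r. 1 / (real (Suc D) - real (pop i)))"
  have loss: "B 0 (2^D) = B 0 (2^D - r) + L" unfolding L_def by (rule B_loss[OF r2])
  have popD: "\<And>i. i < D \<Longrightarrow> pop i \<le> D" by (meson D2 less_trans pop_le_K)
  have dpos: "real d > 0" using assms by simp
  have "L = (\<Sum>i<r. 1 / real d + (real (pop i) / (real d - real (pop i))) / real d)"
    unfolding L_def
  proof (rule sum.cong)
    fix i assume "i \<in> {..<r}"
    hence "pop i \<le> D" using popD rD by simp
    hence lt: "real (pop i) < real d" using dD by simp
    have "real (Suc D) = real d" using dD by simp
    thus "1 / (real (Suc D) - real (pop i)) = 1 / real d + (real (pop i) / (real d - real (pop i))) / real d"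
      using frac_id[of "real d" "real (pop i)"] lt dpos by simp
  qed simp
  also have "\<dots> = real r / real d + (\<Sum>i<r. real (pop i) / (real d - real (pop i))) / real d"
    by (simp add: sum.distrib sum_divide_distrib)
  also have "(\<Sum>i<r. real (pop i) / (real d - real (pop i))) \<le> Sr d"
    unfolding Sr_def
  proof (rule sum_mono2)
    show "{..<r} \<subseteq> {..<d-1}" using rD dD by auto
    fix i assume "i \<in> {..<d - 1} - {..<r}"
    hence "pop i \<le> D" using popD dD by simp
    hence "real (pop i) < real d" using dD by simp
    thus "0 \<le> real (pop i) / (real d - real (pop i))" by simp
  qed simp
  hence "real r / real d + (\<Sum>i<r. real (pop i) / (real d - real (pop i))) / real d \<le> real r / real d + Sr d / real d"
    using dpos by (simp add: divide_right_mono)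
  finally have Lb: "L \<le> real r / real d + Sr d / real d" .
  have Sr: "Sr d / real d < 1/18" using Sr_bound[OF assms(1)] dpos by (simp add: divide_less_eq)
  have cl: "B 0 (2^D) = (2^d - 1) / real d" using B_pow_closed[of D] dD by simp
  have rc: "real r = real c - 1" using assms(2) unfolding r_def by simp
  have main: "(2^d - real c) / real d - 1/18 < B 0 N"
  proof -
    have "(2^d - real c) / real d = (2^d - 1)/real d - real r / real d" unfolding rc by (simp add: diff_divide_distrib)
    thus ?thesis using loss cl Lb Sr mono by linarith
  qed
  show ?thesis
  proof (cases "c = d")
    case True
    have "frakB d c = (2^d - real d - 1/2) / real d" using True by (simp add: frakB_def)
    also have "\<dots> \<le> (2^d - real c) / real d" using True dpos by (simp add: divide_right_mono)
    finally show ?thesis using main by linarith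
  next
    case False
    thus ?thesis using main by (simp add: frakB_def)
  qed
qed

lemma g_step: assumes "2 \<le> K"
  shows "(2^K - 1) / real K - real K / 6 \<le> (2^Suc K - 1) / real (Suc K) - real (Suc K) / 6"
proof -
  define t :: real where "t = 2^K"
  define k where "k = real K"
  have k2: "k \<ge> 2" using assms unfolding k_def by simp
  have tk: "t \<ge> k + 1" unfolding t_def k_def
    using less_exp[of K] by (metis Suc_leI of_nat_1 of_nat_add of_nat_le_iff of_nat_numeral of_nat_power add.commute plus_1_eq_Suc)
  have e: "(2*t - 1) / (k+1) - (t - 1) / k = ((k-1)*t + 1) / (k*(k+1))"
    using k2 by (simp add: field_simps)
  have "(k-1)*t \<ge> (k-1)*(k+1)" using tk k2 by (intro mult_left_mono) auto
  hence h': "k*t - t \<ge> k*k - 1" by (simp add: algebra_simps)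
  have kk: "k*k \<ge> 2*k" using mult_right_mono[OF k2, of k] k2 by simp
  have x1: "6 * ((k-1)*t + 1) = 6*(k*t) - 6*t + 6" by (simp add: algebra_simps)
  have x2: "k*(k+1) = k*k + k" by (simp add: algebra_simps)
  have "6 * ((k-1)*t + 1) \<ge> k*(k+1)" unfolding x1 x2 using h' kk k2 by linarith
  hence y1: "(k*(k+1))/6 \<le> (k-1)*t + 1" by (rule div6)
  have pos: "k*(k+1) > 0" using k2 by simp
  have "((k*(k+1))/6)/(k*(k+1)) \<le> ((k-1)*t + 1) / (k*(k+1))"
    using y1 pos by (intro divide_right_mono) auto
  moreover have "((k*(k+1))/6)/(k*(k+1)) = 1/6" using pos k2 by simp
  ultimately have "((k-1)*t + 1) / (k*(k+1)) \<ge> 1/6" by linarith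
  hence "(2*t - 1) / (k+1) - (t - 1) / k \<ge> 1/6" using e by simp
  hence h: "(2*2^K - 1) / (real K+1) - (2^K - 1) / real K \<ge> 1/6" unfolding t_def k_def .
  have a: "(2::real)^Suc K = 2 * 2^K" by simp
  have b: "real (Suc K) = real K + 1" by simp
  have c: "(real K + 1)/6 = real K/6 + 1/6" by (simp add: add_divide_distrib)
  show ?thesis unfolding a b using h c by linarith
qed

lemma g_mono: assumes "2 \<le> d" "d \<le> K"
  shows "(2^d - 1) / real d - real d / 6 \<le> (2^K - 1) / real K - real K / 6"
  using assms(2)
proof (induction K rule: dec_induct)
  case base thus ?case by simp
next
  case (step K)
  thus ?case using g_step[of K] assms(1) by linarith
qed

theorem mainTheorem12:
  fixes n d c x :: nat and \<F> :: "nat set set"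
  assumes "n \<ge> 1" and "d \<ge> 50"
    and "c \<in> {1..d}"
    and "\<F> \<subseteq> Pow {1..n}" and "hereditary \<F>"
    and "x \<in> {1..n}"
    and "real (degree \<F> x) \<ge> 2 ^ (d - 1) - real c + 1"
  shows "(card (nbhd \<F> x) = d \<longrightarrow> weight \<F> x > frakB d c - 1/18)
       \<and> (card (nbhd \<F> x) > d \<longrightarrow>
            weight \<F> x > frakB d c - 1/18 + (real (card (nbhd \<F> x)) - real d) / 6
          \<and> frakB d c - 1/18 + (real (card (nbhd \<F> x)) - real d) / 6 > frakB d c)"
proof -
  define Fx where "Fx = {F\<in>\<F>. x \<in> F}"
  define G where "G = (\<lambda>F. F - {x}) ` Fx"
  define V where "V = \<Union>G"
  have FxP: "Fx \<subseteq> Pow {1..n}" using assms(4) unfolding Fx_def by auto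
  have fFx: "finite Fx" using FxP by (meson finite_Pow_iff finite_atLeastAtMost finite_subset)
  have finF: "\<And>F. F \<in> Fx \<Longrightarrow> finite F" using FxP by (auto intro: finite_subset)
  have xF: "\<And>F. F \<in> Fx \<Longrightarrow> x \<in> F" unfolding Fx_def by auto
  have inj: "inj_on (\<lambda>F. F - {x}) Fx"
  proof (rule inj_onI)
    fix S S' assume "S \<in> Fx" "S' \<in> Fx" "S - {x} = S' - {x}"
    hence "insert x (S - {x}) = insert x (S' - {x})" "x \<in> S" "x \<in> S'" using xF by auto
    thus "S = S'" by (metis insert_Diff)
  qed
  have cardG: "card G = degree \<F> x" unfolding G_def degree_def Fx_def[symmetric] using inj by (simp add: card_image)
  have wG: "weight \<F> x = Wk 0 G"
  proof -
    have "Wk 0 G = (\<Sum>F\<in>Fx. 1 / (real (card (F - {x})) + real 0 + 1))"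
      unfolding Wk_def G_def using inj by (simp add: sum.reindex)
    also have "\<dots> = (\<Sum>F\<in>Fx. 1 / real (card F))"
    proof (rule sum.cong)
      fix F assume F: "F \<in> Fx"
      hence "card F = Suc (card (F - {x}))" using finF xF by (metis card_Suc_Diff1)
      thus "1 / (real (card (F - {x})) + real 0 + 1) = 1 / real (card F)" by simp
    qed simp
    finally show ?thesis unfolding weight_def Fx_def by simp
  qed
  have her: "\<And>F F'. F \<in> \<F> \<Longrightarrow> F' \<subseteq> F \<Longrightarrow> F' \<in> \<F>" using assms(5) unfolding hereditary_def by blast
  have dcG: "dc G" unfolding dc_def
  proof (intro ballI allI impI)
    fix S T assume S: "S \<in> G" and TS: "T \<subseteq> S"
    then obtain F where F: "F \<in> Fx" "S = F - {x}" unfolding G_def by auto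
    have "insert x T \<subseteq> F" using F TS xF by auto
    hence "insert x T \<in> Fx" using her F unfolding Fx_def by auto
    moreover have "T = insert x T - {x}" using F TS by auto
    ultimately show "T \<in> G" unfolding G_def by blast
  qed
  have GV: "G \<subseteq> Pow V" unfolding V_def by auto
  have fV: "finite V"
  proof -
    have "V \<subseteq> {1..n}" unfolding V_def G_def using FxP by auto
    thus ?thesis by (rule finite_subset) simp
  qed
  have sing: "\<forall>y\<in>V. {y} \<in> G"
  proof
    fix y assume "y \<in> V"
    then obtain S where "S \<in> G" "y \<in> S" unfolding V_def by auto
    thus "{y} \<in> G" using dcG unfolding dc_def by blast
  qed
  have xV: "x \<notin> V" unfolding V_def G_def by auto
  define N where "N = card G"
  have c1: "1 \<le> c" "c \<le> d" using assms(3) by auto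
  have "real (N + c) \<ge> real (2^(d-1) + 1)" using assms(7) cardG unfolding N_def by simp
  hence Nc: "N + c \<ge> 2^(d-1) + 1" by (simp only: of_nat_le_iff)
  hence NB: "2^(d-1) - (c-1) \<le> N" by simp
  have P: "frakB d c - 1/18 < B 0 N" using P1[OF assms(2) c1 NB] .
  have WB: "B 0 N \<le> weight \<F> x" using thmX[OF fV GV dcG, of 0] wG unfolding N_def by simp
  have "d - 1 < 2^(d-1)" by (rule less_exp)
  hence "N \<ge> 1" using NB c1 by arith
  hence "Fx \<noteq> {}" using cardG unfolding N_def G_def by auto
  hence nb: "nbhd \<F> x = insert x V"
    unfolding nbhd_def Fx_def[symmetric] V_def G_def using xF by auto
  have cn: "card (nbhd \<F> x) = Suc (card V)" using nb xV fV by simp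
  show ?thesis
  proof (intro conjI impI)
    show "weight \<F> x > frakB d c - 1/18" using P WB by linarith
  next
    assume gt: "card (nbhd \<F> x) > d"
    show "frakB d c - 1/18 + (real (card (nbhd \<F> x)) - real d) / 6 > frakB d c"
      using gt by simp
    have cVd: "card V \<ge> d" using gt cn by simp
    show "weight \<F> x > frakB d c - 1/18 + (real (card (nbhd \<F> x)) - real d) / 6"
    proof (cases "N \<le> 2^(d-1)")
      case True
      have "B 0 N + (real (card V) - real (d-1)) / 6 \<le> Wk 0 G"
        using thmZ[OF fV GV dcG sing, of "d-1"] True unfolding N_def by simp
      moreover have "real (card (nbhd \<F> x)) - real d = real (card V) - real (d-1)"
        using cn assms(2) by simp
      ultimately show ?thesis using P wG by simp
    next
      case False
      define K where "K = (LEAST K. N \<le> (2::nat)^K)"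
      have ex: "\<exists>K. N \<le> (2::nat)^K" using less_exp[of N] by (intro exI[of _ N]) simp
      have K1: "N \<le> 2^K" unfolding K_def by (rule LeastI_ex[OF ex])
      have one: "(1::nat) \<le> 2^(d-1)" by simp
      have "K \<noteq> 0" using K1 False one by (cases K) auto
      then obtain K' where K': "K = Suc K'" by (cases K) auto
      have "\<not> N \<le> 2^K'" using not_less_Least[of K' "\<lambda>K. N \<le> (2::nat)^K"] K' K_def by simp
      hence lt: "2^K' + 1 \<le> N" by simp
      have dK: "d \<le> K"
      proof (rule ccontr)
        assume "\<not> d \<le> K"
        hence "K \<le> d - 1" by simp
        hence "(2::nat)^K \<le> 2^(d-1)" by (rule power_increasing) simp
        thus False using K1 False by linarith
      qed
      have Z: "B 0 N + (real (card V) - real K) / 6 \<le> Wk 0 G"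
        using thmZ[OF fV GV dcG sing, of K] K1 unfolding N_def by simp
      have "B 0 (2^K' + 1) \<le> B 0 N" using lt by (rule B_mono)
      moreover have "B 0 (2^K' + 1) = (2^K - 1) / real K + 1/2"
        using B_pow_closed[of K'] K' by (simp add: B_Suc)
      moreover have "(2^d - 1) / real d - real d / 6 \<le> (2^K - 1) / real K - real K / 6"
        using g_mono[of d K] dK assms(2) by simp
      moreover have "frakB d c \<le> (2^d - 1) / real d"
      proof -
        have dpos: "real d > 0" using assms(2) by simp
        show ?thesis
        proof (cases "c = d")
          case True thus ?thesis using dpos assms(2) by (simp add: frakB_def divide_right_mono)
        next
          case False thus ?thesis using dpos c1 by (simp add: frakB_def divide_right_mono)
        qed
      qed
      moreover have "real (card (nbhd \<F> x)) = real (card V) + 1" using cn by simp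
      ultimately show ?thesis using Z wG by (simp only: diff_divide_distrib add_divide_distrib)
    qed
  qed
qed

end
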